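(* Let $m\ge1$, let $f_1,\dots,f_m$ be real numbers, let $\lambda_{i0}\ge0$ for $i=1,\dots,m$, and let $\lambda_{ij}=\lambda_{ji}\ge0$ for $1\le i<j\le m$. Consider the flow network with vertex set $V=U\cup W\cup\{r,s\}$, where $U=\{u_1,\dots,u_m\}$, $W=\{w_{ij}:1\le i<j\le m\}$, $r$ is the source and $s$ the sink; directed edge set $E=\{(r,u_i)\}_{i=1}^m\cup\{(u_i,s)\}_{i=1}^m\cup\{(u_i,w_{jk}): i\in\{j,k\},\ 1\le j<k\le m\}\cup\{(w_{ij},s):1\le i<j\le m\}$; and capacities $c(r,u_i)=|f_i|$, $c(u_i,s)=\lambda_{i0}$ for $i=1,\dots,m$, $c(u_i,w_{ij})=c(u_j,w_{ij})=\lambda_{ij}$ and $c(w_{ij},s)=\lambda_{ij}$ for $1\le i<j\le m$, with $c(v,v')=0$ whenever $(v',v)\in E$ but $(v,v')\notin E$. If the maximum value of a flow from $r$ to $s$ on this network equals $\sum_{i=1}^m|f_i|$, then there exist real numbers $\xi_{i0}\in[-\lambda_{i0},\lambda_{i0}]$ for $i=1,\dots,m$ and $\xi_{ij},\xi_{ji}\in[-\lambda_{ij},\lambda_{ij}]$ for $1\le i<j\le m$ with $|\xi_{ij}|+|\xi_{ji}|\le\lambda_{ij}$, such that $$f_i+\xi_{i0}+\sum_{j\in\{1,\dots,m\}\setminus\{i\}}\xi_{ij}=0,\qquad i=1,\dots,m.$$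
   Context: A flow on a network is defined on the set of edges together with their reversals: it is a family $\tau=\{\tau_{vv'}\}$ of reals indexed by ordered pairs $(v,v')$ with $(v,v')\in E$ or $(v',v)\in E$, satisfying skew symmetry $\tau_{vv'}=-\tau_{v'v}$; capacity constraint $\tau_{vv'}\le c(v,v')$; and flow conservation $\sum_{v'}\tau_{vv'}=0$ at every vertex $v\notin\{r,s\}$. Its value is the net flow out of the source $r$; the maximum flow value is the maximum of the value over all flows. *)

theory Defs
  imports Complex_Main
begin

text \<open>A flow is a real function on ordered pairs; only the
  values on pairs (v,v') with (v,v') \<in> E or (v',v) \<in> E are relevant.\<close>

definition nbrs :: "'v set \<Rightarrow> ('v \<times> 'v) set \<Rightarrow> 'v \<Rightarrow> 'v set" where
  "nbrs V E v = {v'\<in>V. (v, v') \<in> E \<or> (v', v) \<in> E}"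

definition is_flow ::
  "'v set \<Rightarrow> ('v \<times> 'v) set \<Rightarrow> ('v \<Rightarrow> 'v \<Rightarrow> real) \<Rightarrow> 'v \<Rightarrow> 'v \<Rightarrow> ('v \<Rightarrow> 'v \<Rightarrow> real) \<Rightarrow> bool" where
  "is_flow V E c r s \<tau> \<longleftrightarrow>
     (\<forall>v v'. (v, v') \<in> E \<or> (v', v) \<in> E \<longrightarrow> \<tau> v v' = - \<tau> v' v) \<and>
     (\<forall>v v'. (v, v') \<in> E \<or> (v', v) \<in> E \<longrightarrow> \<tau> v v' \<le> c v v') \<and>
     (\<forall>v\<in>V. v \<noteq> r \<and> v \<noteq> s \<longrightarrow> (\<Sum>v'\<in>nbrs V E v. \<tau> v v') = 0)"

definition flow_value :: "'v set \<Rightarrow> ('v \<times> 'v) set \<Rightarrow> 'v \<Rightarrow> ('v \<Rightarrow> 'v \<Rightarrow> real) \<Rightarrow> real" where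
  "flow_value V E r \<tau> = (\<Sum>v'\<in>nbrs V E r. \<tau> r v')"

definition is_max_flow_value ::
  "'v set \<Rightarrow> ('v \<times> 'v) set \<Rightarrow> ('v \<Rightarrow> 'v \<Rightarrow> real) \<Rightarrow> 'v \<Rightarrow> 'v \<Rightarrow> real \<Rightarrow> bool" where
  "is_max_flow_value V E c r s x \<longleftrightarrow>
     (\<exists>\<tau>. is_flow V E c r s \<tau> \<and> flow_value V E r \<tau> = x) \<and>
     (\<forall>\<tau>. is_flow V E c r s \<tau> \<longrightarrow> flow_value V E r \<tau> \<le> x)"

datatype vtx = Src | Snk | U nat | W nat nat

definition netV :: "nat \<Rightarrow> vtx set" where
  "netV m = {Src, Snk} \<union> U ` {1..m} \<union> {W i j | i j. 1 \<le> i \<and> i < j \<and> j \<le> m}"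

definition netE :: "nat \<Rightarrow> (vtx \<times> vtx) set" where
  "netE m = {(Src, U i) | i. 1 \<le> i \<and> i \<le> m}
          \<union> {(U i, Snk) | i. 1 \<le> i \<and> i \<le> m}
          \<union> {(U i, W j k) | i j k. i \<in> {j, k} \<and> 1 \<le> j \<and> j < k \<and> k \<le> m}
          \<union> {(W i j, Snk) | i j. 1 \<le> i \<and> i < j \<and> j \<le> m}"

fun netcap :: "(nat \<Rightarrow> real) \<Rightarrow> (nat \<Rightarrow> real) \<Rightarrow> (nat \<Rightarrow> nat \<Rightarrow> real) \<Rightarrow> vtx \<Rightarrow> vtx \<Rightarrow> real" where
  "netcap f lam0 lam Src (U i) = \<bar>f i\<bar>"
| "netcap f lam0 lam (U i) Snk = lam0 i"
| "netcap f lam0 lam (U i) (W j k) = lam j k"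
| "netcap f lam0 lam (W i j) Snk = lam i j"
| "netcap f lam0 lam _ _ = 0"

end

theory Submission
  imports Defs
begin

lemma nbrs_Src: "nbrs (netV m) (netE m) Src = U ` {1..m}"
  by (auto simp add: nbrs_def netV_def netE_def)

lemma nbrs_U:
  assumes "i \<in> {1..m}"
  shows "nbrs (netV m) (netE m) (U i) =
     insert Src (insert Snk ((\<lambda>j. W (min i j) (max i j)) ` ({1..m}-{i})))"
proof (rule set_eqI, rule iffI)
  fix x assume "x \<in> nbrs (netV m) (netE m) (U i)"
  then show "x \<in> insert Src (insert Snk ((\<lambda>j. W (min i j) (max i j)) ` ({1..m}-{i})))"
    using assms
    apply (auto simp add: nbrs_def netV_def netE_def image_iff)
     apply (drule_tac x=ja in bspec; simp)
    apply (drule_tac x=ia in bspec; simp)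
    done
next
  fix x assume "x \<in> insert Src (insert Snk ((\<lambda>j. W (min i j) (max i j)) ` ({1..m}-{i})))"
  then show "x \<in> nbrs (netV m) (netE m) (U i)"
    using assms by (auto simp add: nbrs_def netV_def netE_def min_def max_def)
qed

lemma nbrs_W:
  assumes "1 \<le> i" "i < j" "j \<le> m"
  shows "nbrs (netV m) (netE m) (W i j) = {U i, U j, Snk}"
  using assms by (auto simp add: nbrs_def netV_def netE_def)

lemma inj_W: "inj_on (\<lambda>j. W (min i j) (max i j)) ({1..m}-{i})"
  by (auto simp add: inj_on_def min_def max_def split: if_splits)

lemma sgn_bound: "0 \<le> (t::real) \<Longrightarrow> \<bar>- sgn x * t\<bar> \<le> t"
  by (cases "x = 0") (simp_all add: abs_mult)

theorem lemma2:
  fixes m :: nat and f lam0 :: "nat \<Rightarrow> real" and lam :: "nat \<Rightarrow> nat \<Rightarrow> real"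
  assumes "m \<ge> 1"
    and "\<forall>i\<in>{1..m}. lam0 i \<ge> 0"
    and "\<forall>i j. 1 \<le> i \<and> i < j \<and> j \<le> m \<longrightarrow> lam i j = lam j i \<and> lam i j \<ge> 0"
    and "is_max_flow_value (netV m) (netE m) (netcap f lam0 lam) Src Snk (\<Sum>i=1..m. \<bar>f i\<bar>)"
  shows "\<exists>\<xi>0 :: nat \<Rightarrow> real. \<exists>\<xi> :: nat \<Rightarrow> nat \<Rightarrow> real.
           (\<forall>i\<in>{1..m}. - lam0 i \<le> \<xi>0 i \<and> \<xi>0 i \<le> lam0 i) \<and>
           (\<forall>i j. 1 \<le> i \<and> i < j \<and> j \<le> m \<longrightarrow>
              - lam i j \<le> \<xi> i j \<and> \<xi> i j \<le> lam i j \<and>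
              - lam i j \<le> \<xi> j i \<and> \<xi> j i \<le> lam i j \<and>
              \<bar>\<xi> i j\<bar> + \<bar>\<xi> j i\<bar> \<le> lam i j) \<and>
           (\<forall>i\<in>{1..m}. f i + \<xi>0 i + (\<Sum>j\<in>{1..m} - {i}. \<xi> i j) = 0)"
proof -
  let ?V = "netV m" and ?E = "netE m" and ?c = "netcap f lam0 lam"
  obtain \<tau> where fl: "is_flow ?V ?E ?c Src Snk \<tau>"
    and val: "flow_value ?V ?E Src \<tau> = (\<Sum>i=1..m. \<bar>f i\<bar>)"
    using assms(4) unfolding is_max_flow_value_def by blast
  have skew: "\<And>v v'. (v, v') \<in> ?E \<or> (v', v) \<in> ?E \<Longrightarrow> \<tau> v v' = - \<tau> v' v"
    and cap: "\<And>v v'. (v, v') \<in> ?E \<or> (v', v) \<in> ?E \<Longrightarrow> \<tau> v v' \<le> ?c v v'"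
    and cons: "\<And>v. v \<in> ?V \<Longrightarrow> v \<noteq> Src \<Longrightarrow> v \<noteq> Snk \<Longrightarrow> (\<Sum>v'\<in>nbrs ?V ?E v. \<tau> v v') = 0"
    using fl unfolding is_flow_def by blast+
  have EU: "\<And>i. i \<in> {1..m} \<Longrightarrow> (Src, U i) \<in> ?E \<and> (U i, Snk) \<in> ?E"
    by (auto simp: netE_def)
  have EW: "\<And>i j. 1 \<le> i \<Longrightarrow> i < j \<Longrightarrow> j \<le> m \<Longrightarrow>
      (U i, W i j) \<in> ?E \<and> (U j, W i j) \<in> ?E \<and> (W i j, Snk) \<in> ?E"
    by (auto simp: netE_def)
  have srcle: "\<And>i. i \<in> {1..m} \<Longrightarrow> \<tau> Src (U i) \<le> \<bar>f i\<bar>"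
  proof -
    fix i assume i: "i \<in> {1..m}"
    show "\<tau> Src (U i) \<le> \<bar>f i\<bar>" using cap[of Src "U i"] EU[OF i] by simp
  qed
  have srceq: "\<tau> Src (U i) = \<bar>f i\<bar>" if i: "i \<in> {1..m}" for i
  proof (rule ccontr)
    assume "\<tau> Src (U i) \<noteq> \<bar>f i\<bar>"
    with srcle[OF i] have "\<tau> Src (U i) < \<bar>f i\<bar>" by simp
    then have "(\<Sum>j=1..m. \<tau> Src (U j)) < (\<Sum>j=1..m. \<bar>f j\<bar>)"
      using srcle i by (intro sum_strict_mono_ex1) auto
    moreover have "flow_value ?V ?E Src \<tau> = (\<Sum>j=1..m. \<tau> Src (U j))"
      unfolding flow_value_def nbrs_Src by (subst sum.reindex) (auto simp: inj_on_def)
    ultimately show False using val by simp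
  qed
  define g where "g i j = \<tau> (U i) (W (min i j) (max i j))" for i j
  define \<xi>0 where "\<xi>0 i = - sgn (f i) * \<tau> (U i) Snk" for i
  define \<xi> where "\<xi> i j = - sgn (f i) * g i j" for i j
  have snk: "0 \<le> \<tau> (U i) Snk \<and> \<tau> (U i) Snk \<le> lam0 i" if i: "i \<in> {1..m}" for i
  proof -
    have "\<tau> Snk (U i) \<le> 0" using cap[of Snk "U i"] EU[OF i] by simp
    moreover have "\<tau> (U i) Snk \<le> lam0 i" using cap[of "U i" Snk] EU[OF i] by simp
    ultimately show ?thesis using skew[of "U i" Snk] EU[OF i] by simp
  qed
  have gW: "0 \<le> \<tau> (U i) (W i j) \<and> 0 \<le> \<tau> (U j) (W i j) \<and>
      \<tau> (U i) (W i j) + \<tau> (U j) (W i j) \<le> lam i j"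
    if ij: "1 \<le> i" "i < j" "j \<le> m" for i j
  proof -
    note e = EW[OF ij]
    have a: "\<tau> (W i j) (U i) \<le> 0" "\<tau> (W i j) (U j) \<le> 0" "\<tau> (W i j) Snk \<le> lam i j"
      using cap[of "W i j" "U i"] cap[of "W i j" "U j"] cap[of "W i j" Snk] e by auto
    have b: "\<tau> (U i) (W i j) = - \<tau> (W i j) (U i)" "\<tau> (U j) (W i j) = - \<tau> (W i j) (U j)"
      using skew[of "U i" "W i j"] skew[of "U j" "W i j"] e by auto
    have "W i j \<in> ?V" using ij by (auto simp: netV_def)
    then have "(\<Sum>v'\<in>{U i, U j, Snk}. \<tau> (W i j) v') = 0"
      using cons[of "W i j"] nbrs_W[OF ij] by simp
    then have "\<tau> (W i j) (U i) + \<tau> (W i j) (U j) + \<tau> (W i j) Snk = 0"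
      using ij by simp
    then show ?thesis using a b by linarith
  qed
  have consU: "\<tau> (U i) Snk + (\<Sum>j\<in>{1..m}-{i}. g i j) = \<bar>f i\<bar>" if i: "i \<in> {1..m}" for i
  proof -
    have "U i \<in> ?V" using i by (auto simp: netV_def)
    then have "(\<Sum>v'\<in>nbrs ?V ?E (U i). \<tau> (U i) v') = 0" using cons by simp
    also have "(\<Sum>v'\<in>nbrs ?V ?E (U i). \<tau> (U i) v') =
        \<tau> (U i) Src + \<tau> (U i) Snk + (\<Sum>j\<in>{1..m}-{i}. g i j)"
      unfolding nbrs_U[OF i] g_def
      using sum.reindex[OF inj_W, of "\<tau> (U i)" i m] by (simp add: image_iff add.assoc o_def)
    finally show ?thesis using skew[of "U i" Src] EU[OF i] srceq[OF i] by simp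
  qed
  show ?thesis
  proof (intro exI conjI ballI allI impI)
    fix i assume i: "i \<in> {1..m}"
    show "- lam0 i \<le> \<xi>0 i" "\<xi>0 i \<le> lam0 i"
      using snk[OF i] sgn_bound[of "\<tau> (U i) Snk" "f i"] unfolding \<xi>0_def abs_le_iff by linarith+
    have "f i + \<xi>0 i + (\<Sum>j\<in>{1..m} - {i}. \<xi> i j)
        = f i - sgn (f i) * (\<tau> (U i) Snk + (\<Sum>j\<in>{1..m}-{i}. g i j))"
      unfolding \<xi>0_def \<xi>_def by (simp add: sum_negf sum_distrib_left algebra_simps)
    also have "\<dots> = 0" using consU[OF i] by (simp add: sgn_mult_abs)
    finally show "f i + \<xi>0 i + (\<Sum>j\<in>{1..m} - {i}. \<xi> i j) = 0" .
  next
    fix i j assume "1 \<le> i \<and> i < j \<and> j \<le> m"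
    then have ij: "1 \<le> i" "i < j" "j \<le> m" by auto
    have gi: "g i j = \<tau> (U i) (W i j)" and gj: "g j i = \<tau> (U j) (W i j)"
      using ij by (auto simp: g_def min_def max_def)
    have ai: "\<bar>\<xi> i j\<bar> \<le> g i j" and aj: "\<bar>\<xi> j i\<bar> \<le> g j i"
      using gW[OF ij] gi gj sgn_bound[of "g i j" "f i"] sgn_bound[of "g j i" "f j"] unfolding \<xi>_def
      by auto
    show "\<bar>\<xi> i j\<bar> + \<bar>\<xi> j i\<bar> \<le> lam i j"
      using ai aj gW[OF ij] gi gj by linarith
    show "- lam i j \<le> \<xi> i j" "\<xi> i j \<le> lam i j" "- lam i j \<le> \<xi> j i" "\<xi> j i \<le> lam i j"
      using ai aj gW[OF ij] gi gj unfolding abs_le_iff by linarith+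
  qed
qed

end
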